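(* Let $d\ge 1$, $n\ge 1$, and let $\mathbb{K}=\mathbb{Q}=\{h_1,\dots,h_n\}\subset\mathbb{R}^d$ be a set of $n$ pairwise distinct node representations. Consider the GATv2 family of scoring functions $$\mathcal{F}_{\mathrm{GATv2}}=\{e_{a,W,b} : d'\ge 1,\ a\in\mathbb{R}^{d'},\ W\in\mathbb{R}^{d'\times 2d},\ b\in\mathbb{R}^{d'}\},\qquad e_{a,W,b}(h_i,h_j)=a^{\top}\,\mathrm{LeakyReLU}\big(W[\,h_i\,\|\,h_j\,]+b\big),$$ with attention coefficients obtained by softmax normalization over keys. Then this family computes dynamic attention for $\mathbb{K}$ and $\mathbb{Q}$: for every map $\varphi:[n]\to[n]$ there exist parameters such that $e(h_i,h_{\varphi(i)})>e(h_i,h_j)$ (and hence $\alpha_{i\varphi(i)}>\alpha_{ij}$) for all $i\in[n]$ and all $j\neq\varphi(i)$.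
   Context: Here $\|$ denotes vector concatenation, $\mathrm{LeakyReLU}$ is applied coordinatewise with $\mathrm{LeakyReLU}(x)=x$ for $x\ge0$ and $cx$ for $x<0$ with a fixed slope $0<c<1$, and $[n]=\{1,\dots,n\}$. Dynamic scoring: a family $\mathcal{F}$ of functions $\mathbb{R}^d\times\mathbb{R}^d\to\mathbb{R}$ computes dynamic scoring for keys $\{k_1,\dots,k_n\}$ and queries $\{q_1,\dots,q_m\}$ if for every map $\varphi:[m]\to[n]$ there is $f\in\mathcal{F}$ with $f(q_i,k_{\varphi(i)})>f(q_i,k_j)$ for all $i\in[m]$ and all $j\neq\varphi(i)$. A family of attention functions computes dynamic attention if its scoring family computes dynamic scoring, possibly followed by a monotonic normalization such as softmax; the attention coefficients are $\alpha_{ij}=\exp(e(h_i,h_j))/\sum_{j'}\exp(e(h_i,h_{j'}))$. *)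

theory Defs
  imports Complex_Main
begin

text \<open>Vectors in R^k are represented as functions nat => real, of which only the
coordinates 0..k-1 are meaningful. Node indices range over {1..n}.\<close>

definition leaky_relu :: "real \<Rightarrow> real \<Rightarrow> real" where
  "leaky_relu c x = (if x \<ge> 0 then x else c * x)"

definition vconcat :: "nat \<Rightarrow> (nat \<Rightarrow> real) \<Rightarrow> (nat \<Rightarrow> real) \<Rightarrow> nat \<Rightarrow> real" where
  "vconcat d u v = (\<lambda>k. if k < d then u k else v (k - d))"

definition gatv2_score ::
  "real \<Rightarrow> nat \<Rightarrow> nat \<Rightarrow> (nat \<Rightarrow> real) \<Rightarrow> (nat \<Rightarrow> nat \<Rightarrow> real) \<Rightarrow> (nat \<Rightarrow> real)
     \<Rightarrow> (nat \<Rightarrow> real) \<Rightarrow> (nat \<Rightarrow> real) \<Rightarrow> real" where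
  "gatv2_score c d d' a W b x y =
     (\<Sum>r<d'. a r * leaky_relu c ((\<Sum>k<2*d. W r k * vconcat d x y k) + b r))"

definition gatv2_family :: "real \<Rightarrow> nat \<Rightarrow> ((nat \<Rightarrow> real) \<Rightarrow> (nat \<Rightarrow> real) \<Rightarrow> real) set" where
  "gatv2_family c d = {gatv2_score c d d' a W b | d' a W b. d' \<ge> 1}"

definition computes_dynamic_scoring ::
  "((nat \<Rightarrow> real) \<Rightarrow> (nat \<Rightarrow> real) \<Rightarrow> real) set \<Rightarrow> nat \<Rightarrow> (nat \<Rightarrow> nat \<Rightarrow> real)
     \<Rightarrow> nat \<Rightarrow> (nat \<Rightarrow> nat \<Rightarrow> real) \<Rightarrow> bool" where
  "computes_dynamic_scoring F n k m q \<longleftrightarrow>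
     (\<forall>\<phi>. (\<forall>i\<in>{1..m}. \<phi> i \<in> {1..n}) \<longrightarrow>
        (\<exists>f\<in>F. \<forall>i\<in>{1..m}. \<forall>j\<in>{1..n}. j \<noteq> \<phi> i \<longrightarrow> f (q i) (k (\<phi> i)) > f (q i) (k j)))"

definition attn_coeff ::
  "((nat \<Rightarrow> real) \<Rightarrow> (nat \<Rightarrow> real) \<Rightarrow> real) \<Rightarrow> nat \<Rightarrow> (nat \<Rightarrow> nat \<Rightarrow> real) \<Rightarrow> nat \<Rightarrow> nat \<Rightarrow> real" where
  "attn_coeff e n h i j = exp (e (h i) (h j)) / (\<Sum>j'\<in>{1..n}. exp (e (h i) (h j')))"

end

theory Submission
  imports Defs
begin

lemma gen_dir:
  fixes v :: "'p \<Rightarrow> nat \<Rightarrow> real"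
  assumes "finite I" "\<forall>p\<in>I. \<exists>k<D. v p k \<noteq> 0"
  shows "\<exists>t. \<forall>p\<in>I. (\<Sum>k<D. v p k * t ^ k) \<noteq> 0"
proof -
  define c where "c p k = (if k < D then v p k else 0)" for p k
  have eq: "(\<Sum>k<D. v p k * t ^ k) = (\<Sum>k\<le>D. c p k * t ^ k)" for p t
  proof -
    have s: "{..D} = insert D {..<D}" by auto
    have "(\<Sum>k\<le>D. c p k * t ^ k) = c p D * t ^ D + (\<Sum>k<D. c p k * t ^ k)"
      unfolding s by (rule sum.insert) auto
    also have "c p D = 0" by (simp add: c_def)
    also have "(\<Sum>k<D. c p k * t ^ k) = (\<Sum>k<D. v p k * t ^ k)"
      by (rule sum.cong) (auto simp: c_def)
    finally have E: "(\<Sum>k\<le>D. c p k * t ^ k) = 0 * t ^ D + (\<Sum>k<D. v p k * t ^ k)" .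
    show ?thesis unfolding E by (simp only: mult_zero_left add_0_left)
  qed
  have fin: "finite {t. (\<Sum>k\<le>D. c p k * t ^ k) = 0}" if "p \<in> I" for p
  proof -
    have "\<exists>k<D. v p k \<noteq> 0" using assms(2) that by (rule bspec)
    then obtain k where "k < D" "v p k \<noteq> 0" by auto
    then show ?thesis by (intro polyfun_roots_finite[of _ k]) (auto simp: c_def)
  qed
  have "finite (\<Union>p\<in>I. {t. (\<Sum>k\<le>D. c p k * t ^ k) = 0})"
    using fin assms(1) by (intro finite_UN_I) auto
  from ex_new_if_finite[OF infinite_UNIV_char_0 this]
  obtain t :: real where t: "t \<notin> (\<Union>p\<in>I. {t. (\<Sum>k\<le>D. c p k * t ^ k) = 0})"
    by (elim exE)
  show ?thesis
  proof (intro exI ballI)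
    fix p assume "p \<in> I"
    then show "(\<Sum>k<D. v p k * t ^ k) \<noteq> 0" using t unfolding eq by simp
  qed
qed

lemma sum3: "(\<Sum>r<3*(n::nat). (f r :: real)) = (\<Sum>i<n. f (3*i) + f (3*i+1) + f (3*i+2))"
proof (induction n)
  case (Suc n)
  have "3 * Suc n = Suc (Suc (Suc (3*n)))" by simp
  then show ?case using Suc by (simp only: sum.lessThan_Suc) (simp add: algebra_simps)
qed simp

definition hat :: "real \<Rightarrow> real \<Rightarrow> real \<Rightarrow> real" where
  "hat c \<delta> u = leaky_relu c (u + \<delta>) - 2 * leaky_relu c u + leaky_relu c (u - \<delta>)"

lemma leaky_alt: "leaky_relu c x = c * x + (1 - c) * max 0 x"
  unfolding leaky_relu_def by (auto simp: max_def algebra_simps)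

lemma hat_alt: "hat c \<delta> u = (1 - c) * (max 0 (u + \<delta>) - 2 * max 0 u + max 0 (u - \<delta>))"
  unfolding hat_def leaky_alt by (simp add: algebra_simps)

lemma hat_nonneg: "0 < c \<Longrightarrow> c < 1 \<Longrightarrow> 0 < \<delta> \<Longrightarrow> hat c \<delta> u \<ge> 0"
proof -
  assume a: "0 < c" "c < 1" "0 < \<delta>"
  have "max 0 (u + \<delta>) - 2 * max 0 u + max 0 (u - \<delta>) \<ge> 0"
    using a(3) unfolding max_def by (split if_split)+ linarith
  then show ?thesis unfolding hat_alt using a by simp
qed

lemma hat_zero: "0 < c \<Longrightarrow> c < 1 \<Longrightarrow> 0 < \<delta> \<Longrightarrow> hat c \<delta> 0 > 0"
proof -
  assume a: "0 < c" "c < 1" "0 < \<delta>"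
  have "max 0 (0 + \<delta>) - 2 * max 0 0 + max 0 (0 - \<delta>) = \<delta>"
    using a(3) by simp
  then show ?thesis unfolding hat_alt using a by simp
qed

lemma hat_far: "0 < c \<Longrightarrow> c < 1 \<Longrightarrow> 0 < \<delta> \<Longrightarrow> \<bar>u\<bar> \<ge> \<delta> \<Longrightarrow> hat c \<delta> u = 0"
proof -
  assume a: "0 < c" "c < 1" "0 < \<delta>" "\<bar>u\<bar> \<ge> \<delta>"
  have "max 0 (u + \<delta>) - 2 * max 0 u + max 0 (u - \<delta>) = 0"
  proof -
    have "u \<ge> \<delta> \<or> u \<le> - \<delta>" using a(4) by (cases "u < 0") auto
    then show ?thesis using a(3) by (auto simp: max_def)
  qed
  then show ?thesis unfolding hat_alt by simp
qed

lemma score_eq: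
  fixes t \<delta> :: real and T :: "nat \<Rightarrow> real" and d :: nat
  defines "z \<equiv> \<lambda>x y. (\<Sum>k<2*d. t ^ k * vconcat d x y k)"
  shows "gatv2_score c d (3*n) (\<lambda>r. if r mod 3 = 1 then -2 else 1) (\<lambda>r k. t ^ k)
     (\<lambda>r. - T (r div 3 + 1) + (if r mod 3 = 0 then \<delta> else if r mod 3 = 1 then 0 else - \<delta>)) x y
   = (\<Sum>i<n. hat c \<delta> (z x y - T (i+1)))"
proof -
  have "gatv2_score c d (3*n) (\<lambda>r. if r mod 3 = 1 then -2 else 1) (\<lambda>r k. t ^ k)
     (\<lambda>r. - T (r div 3 + 1) + (if r mod 3 = 0 then \<delta> else if r mod 3 = 1 then 0 else - \<delta>)) x y
   = (\<Sum>r<3*n. (if r mod 3 = 1 then -2 else 1) * leaky_relu c (z x y +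
       (- T (r div 3 + 1) + (if r mod 3 = 0 then \<delta> else if r mod 3 = 1 then 0 else - \<delta>))))"
    unfolding gatv2_score_def z_def by simp
  also have "\<dots> = (\<Sum>i<n. hat c \<delta> (z x y - T (i+1)))"
    unfolding sum3
  proof (rule sum.cong[OF refl])
    fix i
    have m: "(3*i) mod 3 = 0" "(3*i) div 3 = i" "(3*i+1) mod 3 = 1" "(3*i+1) div 3 = i"
      "(3*i+2) mod 3 = 2" "(3*i+2) div 3 = (i::nat)" by presburger+
    show "(\<lambda>r. (if r mod 3 = 1 then -2 else 1) * leaky_relu c (z x y +
       (- T (r div 3 + 1) + (if r mod 3 = 0 then \<delta> else if r mod 3 = 1 then 0 else - \<delta>)))) (3*i)
     + (\<lambda>r. (if r mod 3 = 1 then -2 else 1) * leaky_relu c (z x y +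
       (- T (r div 3 + 1) + (if r mod 3 = 0 then \<delta> else if r mod 3 = 1 then 0 else - \<delta>)))) (3*i+1)
     + (\<lambda>r. (if r mod 3 = 1 then -2 else 1) * leaky_relu c (z x y +
       (- T (r div 3 + 1) + (if r mod 3 = 0 then \<delta> else if r mod 3 = 1 then 0 else - \<delta>)))) (3*i+2)
     = hat c \<delta> (z x y - T (i+1))"
      by (simp only: m) (simp add: hat_def algebra_simps)
  qed
  finally show ?thesis .
qed

lemma main:
  fixes c :: real and d n :: nat and h :: "nat \<Rightarrow> nat \<Rightarrow> real"
  assumes c: "0 < c" "c < 1"
    and dist: "\<forall>i\<in>{1..n}. \<forall>j\<in>{1..n}. i \<noteq> j \<longrightarrow> (\<exists>k<d. h i k \<noteq> h j k)"
    and phi: "\<forall>i\<in>{1..n}. \<phi> i \<in> {1..n}"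
  shows "\<exists>d' a W b. d' \<ge> 1 \<and>
            (\<forall>i\<in>{1..n}. \<forall>j\<in>{1..n}. j \<noteq> \<phi> i \<longrightarrow>
               gatv2_score c d d' a W b (h i) (h (\<phi> i)) > gatv2_score c d d' a W b (h i) (h j))"
proof (cases "n = 0")
  case True
  then show ?thesis by auto
next
  case False
  define I where "I = {(i,j,i'). i \<in> {1..n} \<and> j \<in> {1..n} \<and> i' \<in> {1..n} \<and> j \<noteq> \<phi> i}"
  have finI: "finite I"
    by (rule finite_subset[of _ "{1..n} \<times> {1..n} \<times> {1..n}"]) (auto simp: I_def)
  define v where "v p k = (case p of (i,j,i') \<Rightarrow>
     vconcat d (h i) (h j) k - vconcat d (h i') (h (\<phi> i')) k)" for p k
  have nz: "\<forall>p\<in>I. \<exists>k<2*d. v p k \<noteq> 0"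
  proof
    fix p assume "p \<in> I"
    then obtain i j i' where p: "p = (i,j,i')" "i \<in> {1..n}" "j \<in> {1..n}" "i' \<in> {1..n}" "j \<noteq> \<phi> i"
      by (auto simp: I_def)
    show "\<exists>k<2*d. v p k \<noteq> 0"
    proof (cases "i = i'")
      case False
      then obtain k where "k < d" "h i k \<noteq> h i' k" using dist p by blast
      then show ?thesis by (intro exI[of _ k]) (auto simp: v_def p vconcat_def)
    next
      case True
      then obtain k where "k < d" "h j k \<noteq> h (\<phi> i') k" using dist p phi by blast
      then show ?thesis by (intro exI[of _ "d + k"]) (auto simp: v_def p vconcat_def)
    qed
  qed
  obtain t where t: "\<forall>p\<in>I. (\<Sum>k<2*d. v p k * t ^ k) \<noteq> 0"
    using gen_dir[OF finI nz] by blast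
  define z where "z = (\<lambda>x y. (\<Sum>k<2*d. t ^ k * vconcat d x y k))"
  define T where "T i' = z (h i') (h (\<phi> i'))" for i'
  have zne: "z (h i) (h j) \<noteq> T i'" if "(i,j,i') \<in> I" for i j i'
  proof -
    have "z (h i) (h j) - T i' = (\<Sum>k<2*d. v (i,j,i') k * t ^ k)"
      unfolding z_def T_def v_def by (simp add: sum_subtractf[symmetric] algebra_simps)
    then show ?thesis using t that by auto
  qed
  define S where "S = (\<lambda>(i,j,i'). \<bar>z (h i) (h j) - T i'\<bar>) ` I"
  define \<delta> where "\<delta> = Min (insert 1 S)"
  have finS: "finite S" using finI by (simp add: S_def)
  have dpos: "\<delta> > 0"
    unfolding \<delta>_def using finS zne by (auto simp: Min_gr_iff S_def)
  have dle: "\<delta> \<le> \<bar>z (h i) (h j) - T i'\<bar>" if "(i,j,i') \<in> I" for i j i'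
  proof -
    have "\<bar>z (h i) (h j) - T i'\<bar> \<in> S" using that unfolding S_def by force
    then show ?thesis unfolding \<delta>_def using finS by (intro Min_le) auto
  qed
  let ?a = "\<lambda>r. if r mod 3 = 1 then -2 else (1::real)"
  let ?W = "\<lambda>(r::nat) k. t ^ k"
  let ?b = "\<lambda>r. - T (r div 3 + 1) + (if r mod 3 = 0 then \<delta> else if r mod 3 = 1 then 0 else - \<delta>)"
  have sc: "gatv2_score c d (3*n) ?a ?W ?b x y = (\<Sum>i<n. hat c \<delta> (z x y - T (i+1)))" for x y
    unfolding z_def by (rule score_eq)
  show ?thesis
  proof (intro exI conjI ballI impI)
    show "1 \<le> 3*n" using False by simp
  next
    fix i j assume i: "i \<in> {1..n}" and j: "j \<in> {1..n}" and ne: "j \<noteq> \<phi> i"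
    have "(\<Sum>i'<n. hat c \<delta> (z (h i) (h j) - T (i'+1))) = 0"
    proof (rule sum.neutral, rule ballI)
      fix i' assume "i' \<in> {..<n}"
      then have "(i,j,i'+1) \<in> I" using i j ne by (auto simp: I_def)
      then show "hat c \<delta> (z (h i) (h j) - T (i'+1)) = 0"
        using hat_far[OF c dpos] dle by blast
    qed
    moreover have "(\<Sum>i'<n. hat c \<delta> (z (h i) (h (\<phi> i)) - T (i'+1))) > 0"
    proof -
      have "0 < hat c \<delta> (z (h i) (h (\<phi> i)) - T ((i - 1) + 1))"
        using i hat_zero[OF c dpos] by (simp add: T_def)
      also have "\<dots> \<le> (\<Sum>i'<n. hat c \<delta> (z (h i) (h (\<phi> i)) - T (i'+1)))"
        by (rule member_le_sum) (use i hat_nonneg[OF c dpos] in auto)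
      finally show ?thesis .
    qed
    ultimately show "gatv2_score c d (3*n) ?a ?W ?b (h i) (h j) < gatv2_score c d (3*n) ?a ?W ?b (h i) (h (\<phi> i))"
      unfolding sc by simp
  qed
qed

theorem theorem2:
  fixes c :: real and d n :: nat and h :: "nat \<Rightarrow> nat \<Rightarrow> real"
  assumes "0 < c" and "c < 1"
    and "d \<ge> 1" and "n \<ge> 1"
    and "\<forall>i\<in>{1..n}. \<forall>j\<in>{1..n}. i \<noteq> j \<longrightarrow> (\<exists>k<d. h i k \<noteq> h j k)"
  shows "computes_dynamic_scoring (gatv2_family c d) n h n h
    \<and> (\<forall>\<phi>. (\<forall>i\<in>{1..n}. \<phi> i \<in> {1..n}) \<longrightarrow>
         (\<exists>d' a W b. d' \<ge> 1 \<and>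
            (\<forall>i\<in>{1..n}. \<forall>j\<in>{1..n}. j \<noteq> \<phi> i \<longrightarrow>
               gatv2_score c d d' a W b (h i) (h (\<phi> i)) > gatv2_score c d d' a W b (h i) (h j)
             \<and> attn_coeff (gatv2_score c d d' a W b) n h i (\<phi> i)
                 > attn_coeff (gatv2_score c d d' a W b) n h i j)))"
proof -
  have M: "\<exists>d' a W b. d' \<ge> 1 \<and>
            (\<forall>i\<in>{1..n}. \<forall>j\<in>{1..n}. j \<noteq> \<phi> i \<longrightarrow>
               gatv2_score c d d' a W b (h i) (h (\<phi> i)) > gatv2_score c d d' a W b (h i) (h j))"
    if "\<forall>i\<in>{1..n}. \<phi> i \<in> {1..n}" for \<phi>
    using main[OF assms(1,2) assms(5) that] .
  have A: "attn_coeff e n h i j' < attn_coeff e n h i j" if "e (h i) (h j') < e (h i) (h j)" for e i j j'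
  proof -
    have "(\<Sum>j''\<in>{1..n}. exp (e (h i) (h j''))) > 0"
      using assms(4) by (intro sum_pos) auto
    then show ?thesis unfolding attn_coeff_def
      using that by (simp add: divide_strict_right_mono)
  qed
  show ?thesis
  proof (intro conjI allI impI)
    show "computes_dynamic_scoring (gatv2_family c d) n h n h"
      unfolding computes_dynamic_scoring_def gatv2_family_def
    proof (intro allI impI)
      fix \<phi> :: "nat \<Rightarrow> nat" assume "\<forall>i\<in>{1..n}. \<phi> i \<in> {1..n}"
      from M[OF this] obtain d' a W b where H1: "d' \<ge> 1" and H2:
        "\<forall>i\<in>{1..n}. \<forall>j\<in>{1..n}. j \<noteq> \<phi> i \<longrightarrow>
               gatv2_score c d d' a W b (h i) (h (\<phi> i)) > gatv2_score c d d' a W b (h i) (h j)"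
        by blast
      show "\<exists>f\<in>{gatv2_score c d d' a W b |d' a W b. 1 \<le> d'}.
          \<forall>i\<in>{1..n}. \<forall>j\<in>{1..n}. j \<noteq> \<phi> i \<longrightarrow> f (h i) (h j) < f (h i) (h (\<phi> i))"
      proof (rule bexI[of _ "gatv2_score c d d' a W b"])
        show "gatv2_score c d d' a W b \<in> {gatv2_score c d d' a W b |d' a W b. 1 \<le> d'}"
          by (rule CollectI, rule exI[of _ d'], rule exI[of _ a], rule exI[of _ W], rule exI[of _ b]) (intro conjI refl H1)
      qed (use H2 in simp)
    qed
  next
    fix \<phi> :: "nat \<Rightarrow> nat" assume "\<forall>i\<in>{1..n}. \<phi> i \<in> {1..n}"
    from M[OF this] obtain d' a W b where H1: "d' \<ge> 1" and H2:
        "\<forall>i\<in>{1..n}. \<forall>j\<in>{1..n}. j \<noteq> \<phi> i \<longrightarrow>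
               gatv2_score c d d' a W b (h i) (h (\<phi> i)) > gatv2_score c d d' a W b (h i) (h j)"
      by blast
    show "\<exists>d' a W b. d' \<ge> 1 \<and>
            (\<forall>i\<in>{1..n}. \<forall>j\<in>{1..n}. j \<noteq> \<phi> i \<longrightarrow>
               gatv2_score c d d' a W b (h i) (h (\<phi> i)) > gatv2_score c d d' a W b (h i) (h j)
             \<and> attn_coeff (gatv2_score c d d' a W b) n h i (\<phi> i)
                 > attn_coeff (gatv2_score c d d' a W b) n h i j)"
    proof -
      have X: "\<forall>i\<in>{1..n}. \<forall>j\<in>{1..n}. j \<noteq> \<phi> i \<longrightarrow>
               gatv2_score c d d' a W b (h i) (h (\<phi> i)) > gatv2_score c d d' a W b (h i) (h j)
             \<and> attn_coeff (gatv2_score c d d' a W b) n h i (\<phi> i)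
                 > attn_coeff (gatv2_score c d d' a W b) n h i j"
      proof (intro ballI impI)
        fix i j assume ij: "i \<in> {1..n}" "j \<in> {1..n}" "j \<noteq> \<phi> i"
        have *: "gatv2_score c d d' a W b (h i) (h (\<phi> i)) > gatv2_score c d d' a W b (h i) (h j)"
          using H2 ij by blast
        show "gatv2_score c d d' a W b (h i) (h (\<phi> i)) > gatv2_score c d d' a W b (h i) (h j)
             \<and> attn_coeff (gatv2_score c d d' a W b) n h i (\<phi> i)
                 > attn_coeff (gatv2_score c d d' a W b) n h i j"
          using * A[of "gatv2_score c d d' a W b" i j "\<phi> i", OF *] by (rule conjI)
      qed
      show ?thesis
        by (rule exI[of _ d'], rule exI[of _ a], rule exI[of _ W], rule exI[of _ b]) (rule conjI[OF H1 X])
    qed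
  qed
qed

end
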